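(* Let $\beta=\beta(s)$ be a unit speed semi-real quaternionic curve in $\mathcal{Q}_v$ with non-zero curvatures $\kappa(s)$, $k(s)$ and $(r-\varepsilon_t\varepsilon_T\varepsilon_{N_1}\kappa)(s)$. Then $\beta$ is congruent to a semi-real quaternionic rectifying curve if and only if, for some $c\in\mathbb{R}$, $$\varepsilon_t\varepsilon_{n_1}\varepsilon_{N_1}\frac{\kappa(s)(r-\varepsilon_t\varepsilon_T\varepsilon_{N_1}\kappa)(s)\,(s+c)}{k(s)}+\varepsilon_t\varepsilon_{n_2}\varepsilon_{N_1}\left[\frac{\kappa(s)k(s)+(s+c)[\kappa'(s)k(s)-\kappa(s)k'(s)]}{k^2(s)(r-\varepsilon_t\varepsilon_T\varepsilon_{N_1}\kappa)(s)}\right]'=0.$$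
   Context: $\mathcal{Q}_v$ denotes the semi-real quaternions, identified with the semi-Euclidean space $\mathbb{R}^4_2$ with inner product $h(p,q)=p_1q_1+p_2q_2-p_3q_3-p_4q_4$. A semi-real quaternionic curve $\beta:I\to\mathcal{Q}_v$ is unit speed (pseudo arc length $s$) if $T=\beta'$ satisfies $h(T,T)=\varepsilon_T=\pm1$. Its non-null Serret–Frenet frame $\{T,N_1,N_2,N_3\}$ satisfies $T'=\varepsilon_{N_1}\kappa N_1$, $N_1'=-\varepsilon_t\varepsilon_{N_1}\kappa T+\varepsilon_{n_1}kN_2$, $N_2'=-\varepsilon_t kN_1+\varepsilon_{n_1}(r-\varepsilon_t\varepsilon_T\varepsilon_{N_1}\kappa)N_3$, $N_3'=-\varepsilon_{n_2}(r-\varepsilon_t\varepsilon_T\varepsilon_{N_1}\kappa)N_2$, where $\kappa=\varepsilon_{N_1}\|T'\|$ is the principal curvature of $\beta$; $k$ and $r$ are the principal curvature and torsion of the associated semi-real spatial quaternionic curve $\alpha$ in $\mathbb{R}^3_1$ whose Frenet frame $\{\mathbf{t},\mathbf{n}_1,\mathbf{n}_2\}$ has signs $h(\mathbf{t},\mathbf{t})=\varepsilon_t$, $h(\mathbf{n}_1,\mathbf{n}_1)=\varepsilon_{n_1}$, $h(\mathbf{n}_2,\mathbf{n}_2)=\varepsilon_{n_2}$, related to $\beta$'s frame by $N_1=\varepsilon_T(\mathbf{t}\times T)$, $N_2=\varepsilon_T(\mathbf{n}_1\times T)$, $N_3=\varepsilon_T(\mathbf{n}_2\times T)$ ($\times$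 the semi-real quaternion product); moreover $h(N_1,N_1)=\varepsilon_{N_1}$, $h(N_2,N_2)=\varepsilon_{n_1}\varepsilon_T$, $h(N_3,N_3)=\varepsilon_{n_2}\varepsilon_T$. Thus $k$ is the torsion and $r-\varepsilon_t\varepsilon_T\varepsilon_{N_1}\kappa$ the bitorsion of $\beta$. $\beta$ is a semi-real quaternionic rectifying curve if $\beta(s)=\lambda(s)T(s)+\mu(s)N_2(s)+\nu(s)N_3(s)$ for some differentiable functions $\lambda,\mu,\nu$; congruent means equal up to a rigid motion (here a translation). *)

theory Defs
  imports "HOL-Analysis.Analysis"
begin

text \<open>Semi-real quaternions are identified with the semi-Euclidean space R^4_2,
  modelled as real^4 with the indefinite inner product h of index 2.\<close>

definition sq_h :: "real^4 \<Rightarrow> real^4 \<Rightarrow> real" where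
  "sq_h p q = p$1 * q$1 + p$2 * q$2 - p$3 * q$3 - p$4 * q$4"

definition sq_norm :: "real^4 \<Rightarrow> real" where
  "sq_norm p = sqrt \<bar>sq_h p p\<bar>"

definition sq_rectifying ::
  "real set \<Rightarrow> (real \<Rightarrow> real^4) \<Rightarrow> (real \<Rightarrow> real^4) \<Rightarrow> (real \<Rightarrow> real^4) \<Rightarrow> (real \<Rightarrow> real^4) \<Rightarrow> bool" where
  "sq_rectifying I gamma T N2 N3 \<longleftrightarrow>
     (\<exists>lam mu nu :: real \<Rightarrow> real.
        (\<forall>s\<in>I. lam differentiable (at s) \<and> mu differentiable (at s) \<and> nu differentiable (at s)) \<and>
        (\<forall>s\<in>I. gamma s = lam s *\<^sub>R T s + mu s *\<^sub>R N2 s + nu s *\<^sub>R N3 s))"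

text \<open>Congruent (by a translation, which leaves the Frenet frame unchanged)
  to a rectifying curve.\<close>
definition sq_congruent_rectifying ::
  "real set \<Rightarrow> (real \<Rightarrow> real^4) \<Rightarrow> (real \<Rightarrow> real^4) \<Rightarrow> (real \<Rightarrow> real^4) \<Rightarrow> (real \<Rightarrow> real^4) \<Rightarrow> bool" where
  "sq_congruent_rectifying I beta T N2 N3 \<longleftrightarrow>
     (\<exists>a :: real^4. sq_rectifying I (\<lambda>s. beta s - a) T N2 N3)"

end

theory Submission
  imports Defs
begin

lemma sq_h_lin:
  "sq_h (x + y) z = sq_h x z + sq_h y z"
  "sq_h (a *\<^sub>R x) z = a * sq_h x z"
  by (simp_all add: sq_h_def algebra_simps)

lemma sq_h_sym: "sq_h x y = sq_h y x" by (simp add: sq_h_def algebra_simps)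

theorem theorem4p2:
  fixes I :: "real set"
    and beta T N1 N2 N3 :: "real \<Rightarrow> real^4"
    and \<kappa> k r :: "real \<Rightarrow> real"
    and eT eN1 et en1 en2 :: real
  assumes I: "open I" "is_interval I" "I \<noteq> {}"
    and signs: "eT \<in> {-1, 1}" "eN1 \<in> {-1, 1}" "et \<in> {-1, 1}" "en1 \<in> {-1, 1}" "en2 \<in> {-1, 1}"
    and unit_speed: "\<forall>s\<in>I. (beta has_vector_derivative T s) (at s)"
      "\<forall>s\<in>I. sq_h (T s) (T s) = eT"
    and frame_norms: "\<forall>s\<in>I. sq_h (N1 s) (N1 s) = eN1"
      "\<forall>s\<in>I. sq_h (N2 s) (N2 s) = en1 * eT"
      "\<forall>s\<in>I. sq_h (N3 s) (N3 s) = en2 * eT"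
    and frame_orth: "\<forall>s\<in>I. sq_h (T s) (N1 s) = 0" "\<forall>s\<in>I. sq_h (T s) (N2 s) = 0"
      "\<forall>s\<in>I. sq_h (T s) (N3 s) = 0" "\<forall>s\<in>I. sq_h (N1 s) (N2 s) = 0"
      "\<forall>s\<in>I. sq_h (N1 s) (N3 s) = 0" "\<forall>s\<in>I. sq_h (N2 s) (N3 s) = 0"
    and frenet_T: "\<forall>s\<in>I. (T has_vector_derivative (eN1 * \<kappa> s) *\<^sub>R N1 s) (at s)"
    and frenet_N1: "\<forall>s\<in>I. (N1 has_vector_derivative
        ((- et * eN1 * \<kappa> s) *\<^sub>R T s + (en1 * k s) *\<^sub>R N2 s)) (at s)"
    and frenet_N2: "\<forall>s\<in>I. (N2 has_vector_derivative
        ((- et * k s) *\<^sub>R N1 s + (en1 * (r s - et * eT * eN1 * \<kappa> s)) *\<^sub>R N3 s)) (at s)"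
    and frenet_N3: "\<forall>s\<in>I. (N3 has_vector_derivative
        ((- en2 * (r s - et * eT * eN1 * \<kappa> s)) *\<^sub>R N2 s)) (at s)"
    and kappa_def: "\<forall>s\<in>I. \<kappa> s = eN1 * sq_norm (vector_derivative T (at s))"
    and smooth: "\<forall>s\<in>I. \<kappa> differentiable (at s) \<and> k differentiable (at s) \<and> r differentiable (at s)
        \<and> deriv \<kappa> differentiable (at s) \<and> deriv k differentiable (at s)"
    and nonzero: "\<forall>s\<in>I. \<kappa> s \<noteq> 0" "\<forall>s\<in>I. k s \<noteq> 0"
      "\<forall>s\<in>I. r s - et * eT * eN1 * \<kappa> s \<noteq> 0"
  shows "sq_congruent_rectifying I beta T N2 N3 \<longleftrightarrow>
    (\<exists>c::real. \<forall>s\<in>I.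
       et * en1 * eN1 * (\<kappa> s * (r s - et * eT * eN1 * \<kappa> s) * (s + c)) / k s
     + et * en2 * eN1 * deriv (\<lambda>u. (\<kappa> u * k u + (u + c) * (deriv \<kappa> u * k u - \<kappa> u * deriv k u))
                                   / ((k u)\<^sup>2 * (r u - et * eT * eN1 * \<kappa> u))) s = 0)"
proof -
  define b where "b = (\<lambda>u. r u - et * eT * eN1 * \<kappa> u)"
  have bs: "\<And>u. r u - et * eT * eN1 * \<kappa> u = b u" by (simp add: b_def)
  define G where "G = (\<lambda>c u. (\<kappa> u * k u + (u + c) * (deriv \<kappa> u * k u - \<kappa> u * deriv k u))
                                   / ((k u)\<^sup>2 * b u))"
  have Gf: "\<And>c. (\<lambda>u. (\<kappa> u * k u + (u + c) * (deriv \<kappa> u * k u - \<kappa> u * deriv k u))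
                                   / ((k u)\<^sup>2 * b u)) = G c" by (simp add: G_def)
  have sq: "eT*eT = 1" "eN1*eN1=1" "et*et=1" "en1*en1=1" "en2*en2=1" using signs by auto
  have nzs: "eT \<noteq> 0" "eN1 \<noteq> 0" "et \<noteq> 0" "en1 \<noteq> 0" "en2 \<noteq> 0" using signs by auto
  have dkap: "\<And>s. s\<in>I \<Longrightarrow> (\<kappa> has_real_derivative deriv \<kappa> s) (at s)"
    using smooth DERIV_deriv_iff_real_differentiable by blast
  have dk: "\<And>s. s\<in>I \<Longrightarrow> (k has_real_derivative deriv k s) (at s)"
    using smooth DERIV_deriv_iff_real_differentiable by blast
  have Md: "((\<lambda>u. et*eN1*\<kappa> u*(u+c)/k u) has_real_derivative
     (et*eN1*(\<kappa> s * k s + (s + c) * (deriv \<kappa> s * k s - \<kappa> s * deriv k s)) / (k s)\<^sup>2)) (at s)"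
    if s: "s \<in> I" for c s
    using dkap[OF s] dk[OF s] nonzero(2) s
    by (auto intro!: derivative_eq_intros simp: field_simps power2_eq_square)
  have Gdiff: "G c differentiable (at s)" if s: "s \<in> I" for c s
    unfolding G_def b_def using smooth nonzero s
    by (auto intro!: derivative_intros)
  have bnz: "\<And>s. s \<in> I \<Longrightarrow> b s \<noteq> 0" using nonzero(3) by (simp add: b_def)
  have knz: "\<And>s. s \<in> I \<Longrightarrow> k s \<noteq> 0" using nonzero(2) by simp
  show ?thesis
    unfolding bs Gf
  proof
    assume "sq_congruent_rectifying I beta T N2 N3"
    then obtain a lam mu nu where dif: "\<forall>s\<in>I. lam differentiable (at s) \<and> mu differentiable (at s) \<and> nu differentiable (at s)"
      and eq: "\<forall>s\<in>I. beta s - a = lam s *\<^sub>R T s + mu s *\<^sub>R N2 s + nu s *\<^sub>R N3 s"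
      unfolding sq_congruent_rectifying_def sq_rectifying_def by blast
    have coef: "deriv lam s = 1 \<and> lam s * eN1 * \<kappa> s - mu s * et * k s = 0 \<and>
        deriv mu s - nu s * en2 * b s = 0 \<and> mu s * en1 * b s + deriv nu s = 0" if s: "s\<in>I" for s
    proof -
      have dl: "(lam has_real_derivative deriv lam s) (at s)"
        and dm: "(mu has_real_derivative deriv mu s) (at s)"
        and dn: "(nu has_real_derivative deriv nu s) (at s)"
        using dif s DERIV_deriv_iff_real_differentiable by blast+
      have V: "((\<lambda>u. lam u *\<^sub>R T u + mu u *\<^sub>R N2 u + nu u *\<^sub>R N3 u) has_vector_derivative
          (lam s *\<^sub>R ((eN1 * \<kappa> s) *\<^sub>R N1 s) + deriv lam s *\<^sub>R T s
          + (mu s *\<^sub>R ((- et * k s) *\<^sub>R N1 s + (en1 * (r s - et * eT * eN1 * \<kappa> s)) *\<^sub>R N3 s) + deriv mu s *\<^sub>R N2 s)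
          + (nu s *\<^sub>R ((- en2 * (r s - et * eT * eN1 * \<kappa> s)) *\<^sub>R N2 s) + deriv nu s *\<^sub>R N3 s))) (at s)"
        using s frenet_T frenet_N2 frenet_N3
        by (intro has_vector_derivative_add has_vector_derivative_scaleR dl dm dn) auto
      have "((\<lambda>u. beta u - a) has_vector_derivative T s) (at s)"
        using unit_speed s by (auto intro!: derivative_eq_intros)
      then have "((\<lambda>u. lam u *\<^sub>R T u + mu u *\<^sub>R N2 u + nu u *\<^sub>R N3 u) has_vector_derivative T s) (at s)"
        by (rule has_vector_derivative_transform_within_open[OF _ I(1) s]) (use eq in auto)
      from vector_derivative_unique_at[OF this V]
      have E2: "T s = (deriv lam s) *\<^sub>R T s + (lam s * eN1 * \<kappa> s - mu s * et * k s) *\<^sub>R N1 s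
          + (deriv mu s - nu s*en2*b s) *\<^sub>R N2 s + (mu s * en1 * b s + deriv nu s) *\<^sub>R N3 s"
        by (simp add: b_def algebra_simps)
      have o: "sq_h (T s) (N1 s) = 0" "sq_h (T s) (N2 s) = 0" "sq_h (T s) (N3 s) = 0"
        "sq_h (N1 s) (N2 s) = 0" "sq_h (N1 s) (N3 s) = 0" "sq_h (N2 s) (N3 s) = 0"
        "sq_h (N1 s) (T s) = 0" "sq_h (N2 s) (T s) = 0" "sq_h (N3 s) (T s) = 0"
        "sq_h (N2 s) (N1 s) = 0" "sq_h (N3 s) (N1 s) = 0" "sq_h (N3 s) (N2 s) = 0"
        using frame_orth s sq_h_sym by metis+
      have n: "sq_h (T s) (T s) = eT" "sq_h (N1 s) (N1 s) = eN1" "sq_h (N2 s) (N2 s) = en1 * eT"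
        "sq_h (N3 s) (N3 s) = en2 * eT" using unit_speed frame_norms s by auto
      have h1: "eT = deriv lam s * eT"
        using arg_cong[OF E2, of "\<lambda>v. sq_h v (T s)"] by (simp add: sq_h_lin o n)
      have h2: "0 = (lam s * eN1 * \<kappa> s - mu s * et * k s) * eN1"
        using arg_cong[OF E2, of "\<lambda>v. sq_h v (N1 s)"] by (simp add: sq_h_lin o n)
      have h3: "0 = (deriv mu s - nu s*en2*b s) * (en1 * eT)"
        using arg_cong[OF E2, of "\<lambda>v. sq_h v (N2 s)"] by (simp add: sq_h_lin o n)
      have h4: "0 = (mu s * en1 * b s + deriv nu s) * (en2 * eT)"
        using arg_cong[OF E2, of "\<lambda>v. sq_h v (N3 s)"] by (simp add: sq_h_lin o n)
      show ?thesis using h1 h2 h3 h4 nzs by auto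
    qed
    have "\<exists>c. \<forall>x\<in>I. lam x - x = c"
    proof (rule has_field_derivative_zero_constant)
      show "convex I" using I(2) is_interval_convex_1 by blast
      fix x assume x: "x \<in> I"
      have "(lam has_real_derivative deriv lam x) (at x)"
        using dif x DERIV_deriv_iff_real_differentiable by blast
      then have "((\<lambda>x. lam x - x) has_real_derivative (1 - 1)) (at x)"
        using coef[OF x] by (auto intro!: derivative_eq_intros)
      then show "((\<lambda>x. lam x - x) has_real_derivative 0) (at x within I)"
        by (simp add: has_field_derivative_at_within)
    qed
    then obtain c0 where c0: "\<forall>x\<in>I. lam x - x = c0" by blast
    have mueq: "mu s = et*eN1*\<kappa> s*(s+c0)/k s" if s: "s \<in> I" for s
    proof -
      have "lam s * eN1 * \<kappa> s = mu s * et * k s" using coef[OF s] by simp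
      then have "et * (lam s * eN1 * \<kappa> s) = mu s * (et * et) * k s" by (simp add: algebra_simps)
      then show ?thesis using sq c0 s knz[OF s] by (simp add: field_simps)
    qed
    have dmu: "deriv mu s = et*eN1*(\<kappa> s * k s + (s + c0) * (deriv \<kappa> s * k s - \<kappa> s * deriv k s)) / (k s)\<^sup>2"
      if s: "s \<in> I" for s
    proof (rule DERIV_imp_deriv)
      show "(mu has_real_derivative et*eN1*(\<kappa> s * k s + (s + c0) * (deriv \<kappa> s * k s - \<kappa> s * deriv k s)) / (k s)\<^sup>2) (at s)"
        by (rule has_field_derivative_transform_within_open[OF Md[OF s] I(1) s]) (use mueq in auto)
    qed
    have nueq: "en2*et*eN1*nu s = G c0 s" if s: "s \<in> I" for s
    proof -
      have "deriv mu s = nu s * en2 * b s" using coef[OF s] by simp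
      then have "en2 * deriv mu s = nu s * (en2 * en2) * b s" by simp
      then have "nu s = en2 * deriv mu s / b s" using sq bnz[OF s] by (simp add: field_simps)
      then have "en2*et*eN1*nu s = (en2*en2)*(et*et)*(eN1*eN1)*(\<kappa> s * k s + (s + c0) * (deriv \<kappa> s * k s - \<kappa> s * deriv k s)) / ((k s)\<^sup>2 * b s)"
        using dmu[OF s] by (simp add: field_simps)
      then show ?thesis using sq by (simp add: G_def)
    qed
    have dG: "deriv (G c0) s = en2*et*eN1*deriv nu s" if s: "s \<in> I" for s
    proof (rule DERIV_imp_deriv)
      have "(nu has_real_derivative deriv nu s) (at s)"
        using dif s DERIV_deriv_iff_real_differentiable by blast
      then have "((\<lambda>u. en2*et*eN1*nu u) has_real_derivative en2*et*eN1*deriv nu s) (at s)"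
        by (auto intro!: derivative_eq_intros)
      then show "(G c0 has_real_derivative en2*et*eN1*deriv nu s) (at s)"
        by (rule has_field_derivative_transform_within_open[OF _ I(1) s]) (use nueq in auto)
    qed
    show "\<exists>c. \<forall>s\<in>I. et * en1 * eN1 * (\<kappa> s * b s * (s + c)) / k s + et * en2 * eN1 * deriv (G c) s = 0"
    proof (intro exI ballI)
      fix s assume s: "s \<in> I"
      have dn: "deriv nu s = - (mu s * en1 * b s)" using coef[OF s] by simp
      have "et * en2 * eN1 * deriv (G c0) s = (et*et)*(en2*en2)*(eN1*eN1) * deriv nu s"
        using dG[OF s] by (simp add: algebra_simps)
      also have "\<dots> = - (et*eN1*\<kappa> s*(s+c0)/k s * en1 * b s)" using sq dn mueq[OF s] by simp
      finally show "et * en1 * eN1 * (\<kappa> s * b s * (s + c0)) / k s + et * en2 * eN1 * deriv (G c0) s = 0"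
        by (simp add: field_simps)
    qed
  next
    assume "\<exists>c. \<forall>s\<in>I. et * en1 * eN1 * (\<kappa> s * b s * (s + c)) / k s + et * en2 * eN1 * deriv (G c) s = 0"
    then obtain c where C: "\<forall>s\<in>I. et * en1 * eN1 * (\<kappa> s * b s * (s + c)) / k s + et * en2 * eN1 * deriv (G c) s = 0"
      by blast
    define mu where "mu = (\<lambda>u. et*eN1*\<kappa> u*(u+c)/k u)"
    define nu where "nu = (\<lambda>u. en2*et*eN1*G c u)"
    define gam where "gam = (\<lambda>u. beta u - ((u + c) *\<^sub>R T u + mu u *\<^sub>R N2 u + nu u *\<^sub>R N3 u))"
    have "\<exists>a. \<forall>x\<in>I. gam x = a"
    proof (rule has_derivative_zero_constant)
      show "convex I" using I(2) is_interval_convex_1 by blast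
      fix s assume s: "s \<in> I"
      have dG: "(G c has_real_derivative deriv (G c) s) (at s)"
        using Gdiff[OF s] DERIV_deriv_iff_real_differentiable by blast
      have dnu: "(nu has_real_derivative en2*et*eN1*deriv (G c) s) (at s)"
        unfolding nu_def using dG by (auto intro!: derivative_eq_intros)
      have dmu: "(mu has_real_derivative et*eN1*(\<kappa> s * k s + (s + c) * (deriv \<kappa> s * k s - \<kappa> s * deriv k s)) / (k s)\<^sup>2) (at s)"
        unfolding mu_def by (rule Md[OF s])
      have dl: "((\<lambda>u. u + c) has_real_derivative 1) (at s)" by (auto intro!: derivative_eq_intros)
      have V: "((\<lambda>u. (u + c) *\<^sub>R T u + mu u *\<^sub>R N2 u + nu u *\<^sub>R N3 u) has_vector_derivative
          ((s + c) *\<^sub>R ((eN1 * \<kappa> s) *\<^sub>R N1 s) + 1 *\<^sub>R T s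
          + (mu s *\<^sub>R ((- et * k s) *\<^sub>R N1 s + (en1 * (r s - et * eT * eN1 * \<kappa> s)) *\<^sub>R N3 s)
              + (et*eN1*(\<kappa> s * k s + (s + c) * (deriv \<kappa> s * k s - \<kappa> s * deriv k s)) / (k s)\<^sup>2) *\<^sub>R N2 s)
          + (nu s *\<^sub>R ((- en2 * (r s - et * eT * eN1 * \<kappa> s)) *\<^sub>R N2 s) + (en2*et*eN1*deriv (G c) s) *\<^sub>R N3 s))) (at s)"
        using s frenet_T frenet_N2 frenet_N3
        by (intro has_vector_derivative_add has_vector_derivative_scaleR dl dmu dnu) auto
      have c1: "(s + c) * eN1 * \<kappa> s - mu s * et * k s = 0"
      proof -
        have "mu s * et * k s = (et*et)*eN1*\<kappa> s*(s+c)" using knz[OF s] by (simp add: mu_def field_simps)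
        then show ?thesis using sq by simp
      qed
      have c2: "et*eN1*(\<kappa> s * k s + (s + c) * (deriv \<kappa> s * k s - \<kappa> s * deriv k s)) / (k s)\<^sup>2 - nu s * en2 * b s = 0"
      proof -
        have "nu s * en2 * b s = (en2*en2)*et*eN1*(\<kappa> s * k s + (s + c) * (deriv \<kappa> s * k s - \<kappa> s * deriv k s))
              / ((k s)\<^sup>2 * b s) * b s" by (simp add: nu_def G_def)
        also have "\<dots> = et*eN1*(\<kappa> s * k s + (s + c) * (deriv \<kappa> s * k s - \<kappa> s * deriv k s)) / (k s)\<^sup>2"
          using sq bnz[OF s] knz[OF s] by (simp add: field_simps)
        finally show ?thesis by simp
      qed
      have c3: "mu s * en1 * b s + en2*et*eN1*deriv (G c) s = 0"
      proof -
        have e: "et * en2 * eN1 * deriv (G c) s = - (et * en1 * eN1 * (\<kappa> s * b s * (s + c)) / k s)"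
          proof -
          have "et * en1 * eN1 * (\<kappa> s * b s * (s + c)) / k s + et * en2 * eN1 * deriv (G c) s = 0"
            using C s by blast
          then show ?thesis by linarith
        qed
        have "en2*et*eN1*deriv (G c) s = - (et * en1 * eN1 * (\<kappa> s * b s * (s + c)) / k s)"
          using e by (simp add: algebra_simps)
        then show ?thesis using knz[OF s] by (simp add: mu_def field_simps)
      qed
      have "((s + c) *\<^sub>R ((eN1 * \<kappa> s) *\<^sub>R N1 s) + 1 *\<^sub>R T s
          + (mu s *\<^sub>R ((- et * k s) *\<^sub>R N1 s + (en1 * (r s - et * eT * eN1 * \<kappa> s)) *\<^sub>R N3 s)
              + (et*eN1*(\<kappa> s * k s + (s + c) * (deriv \<kappa> s * k s - \<kappa> s * deriv k s)) / (k s)\<^sup>2) *\<^sub>R N2 s)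
          + (nu s *\<^sub>R ((- en2 * (r s - et * eT * eN1 * \<kappa> s)) *\<^sub>R N2 s) + (en2*et*eN1*deriv (G c) s) *\<^sub>R N3 s))
        = T s + ((s + c) * eN1 * \<kappa> s - mu s * et * k s) *\<^sub>R N1 s
          + (et*eN1*(\<kappa> s * k s + (s + c) * (deriv \<kappa> s * k s - \<kappa> s * deriv k s)) / (k s)\<^sup>2 - nu s * en2 * b s) *\<^sub>R N2 s
          + (mu s * en1 * b s + en2*et*eN1*deriv (G c) s) *\<^sub>R N3 s" (is "?D = _")
        by (simp add: b_def algebra_simps)
      also have "\<dots> = T s" using c1 c2 c3 by simp
      finally have eqT: "?D = T s" .
      have V': "((\<lambda>u. (u + c) *\<^sub>R T u + mu u *\<^sub>R N2 u + nu u *\<^sub>R N3 u) has_vector_derivative T s) (at s)"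
        using V unfolding eqT .
      have "(gam has_vector_derivative (T s - T s)) (at s)"
        unfolding gam_def using unit_speed s V' by (intro has_vector_derivative_diff) auto
      then show "(gam has_derivative (\<lambda>h. 0)) (at s within I)"
        by (auto simp: has_vector_derivative_def intro: has_derivative_at_withinI)
    qed
    then obtain a where a: "\<forall>x\<in>I. gam x = a" by blast
    show "sq_congruent_rectifying I beta T N2 N3"
      unfolding sq_congruent_rectifying_def sq_rectifying_def
    proof (intro exI conjI ballI)
      fix s assume s: "s \<in> I"
      show "(\<lambda>u. u + c) differentiable (at s)" by (auto intro!: derivative_intros)
      show "mu differentiable (at s)" unfolding mu_def using smooth nonzero s
        by (auto intro!: derivative_intros)
      show "nu differentiable (at s)" unfolding nu_def using Gdiff[OF s]
        by (auto intro!: derivative_intros)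
      show "beta s - a = (s + c) *\<^sub>R T s + mu s *\<^sub>R N2 s + nu s *\<^sub>R N3 s"
        using a s unfolding gam_def by (auto simp: algebra_simps)
    qed
  qed
qed

end
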